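(* Let $\mathfrak{H}$ be a Euclidean space and let $(\mathcal{X},\mathsf{S},\gamma,(\Lambda_{a})_{a\in\mathcal{A}})$ be a spectral decomposition system for $\mathfrak{H}$ such that the set $\{\Lambda_a\}_{a\in\mathcal{A}}$ is closed in $\mathscr{L}(\mathcal{X},\mathfrak{H})$. Let $\varphi\colon\mathcal{X}\to[-\infty,+\infty]$ be $\mathsf{S}$-invariant and let $X\in\mathfrak{H}$. Then: (i) $\partial_{\mathsf{F}}(\varphi\circ\gamma)(X)=\{\Lambda_a y: y\in\partial_{\mathsf{F}}\varphi(\gamma(X))\ \text{and}\ a\in\mathcal{A}_X\}$; (ii) $\partial_{\mathsf{L}}(\varphi\circ\gamma)(X)=\{\Lambda_a y: y\in\partial_{\mathsf{L}}\varphi(\gamma(X))\ \text{and}\ a\in\mathcal{A}_X\}$.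
   Context: A Euclidean space is a finite-dimensional real Hilbert space; $\mathscr{L}(\mathcal{X},\mathfrak{H})$ carries the operator-norm topology. A spectral decomposition system for a Euclidean space $\mathfrak{H}$ is a tuple $(\mathcal{X},\mathsf{S},\gamma,(\Lambda_a)_{a\in\mathcal{A}})$ where $\mathcal{X}$ is a Euclidean space, $\mathsf{S}$ is a group acting on $\mathcal{X}$ such that each map $x\mapsto \mathsf{s}\cdot x$ is a linear isometry, $\gamma\colon\mathfrak{H}\to\mathcal{X}$ is a mapping, and each $\Lambda_a\colon\mathcal{X}\to\mathfrak{H}$ is a linear isometry, such that: [A] there exists a mapping $\tau\colon\mathcal{X}\to\mathcal{X}$ with $\tau(\mathsf{s}\cdot x)=\tau(x)$ for all $\mathsf{s},x$, $\tau(x)\in\mathsf{S}\cdot x$ for all $x$, and $\gamma\circ\Lambda_a=\tau$ for all $a\in\mathcal{A}$; [B] for every $X\in\mathfrak{H}$ there exists $a\in\mathcal{A}$ with $X=\Lambda_a\gamma(X)$; [C] $\langle X,Y\rangle\le\langle\gamma(X),\gamma(Y)\rangle$ for all $X,Y\in\mathfrak{H}$. $\mathcal{A}_X=\{a\in\mathcal{A}:X=\Lambda_a\gamma(X)\}$. A function $\varphi$ on $\mathcal{X}$ is $\mathsf{S}$-invariant if $\varphi(\mathsf{s}\cdot x)=\varphi(x)$ for all $\mathsf{s}\in\mathsf{S}$, $x\in\mathcal{X}$. For $f\colon\mathcal{H}\to[-\infty,+\infty]$ on a Euclidean space $\mathcal{H}$: the Fréchet subdifferential is $\partial_{\mathsf{F}}f(x)=\{y:\liminf_{z\to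 x,z\ne x}(f(z)-f(x)-\langle z-x,y\rangle)/\|z-x\|\ge0\}$ if $f(x)\in\mathbb{R}$ and $\varnothing$ otherwise; the limiting subdifferential $\partial_{\mathsf{L}}f(x)$, for $f(x)\in\mathbb{R}$, is the set of $y$ for which there exist $x_n\to x$ with $f(x_n)\to f(x)$ and $y_n\to y$ with $y_n\in\partial_{\mathsf{F}}f(x_n)$, and $\partial_{\mathsf{L}}f(x)=\varnothing$ if $f(x)\in\{\pm\infty\}$. *)

theory Defs
  imports "HOL-Analysis.Analysis" "HOL-Algebra.Group"
begin

definition frechet_subdiff :: "('a::euclidean_space \<Rightarrow> ereal) \<Rightarrow> 'a \<Rightarrow> 'a set" where
  "frechet_subdiff f x =
     (if \<bar>f x\<bar> \<noteq> \<infinity> then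
        {y. Liminf (at x) (\<lambda>z. (f z - f x - ereal (inner (z - x) y)) / ereal (norm (z - x))) \<ge> 0}
      else {})"

definition limiting_subdiff :: "('a::euclidean_space \<Rightarrow> ereal) \<Rightarrow> 'a \<Rightarrow> 'a set" where
  "limiting_subdiff f x =
     (if \<bar>f x\<bar> \<noteq> \<infinity> then
        {y. \<exists>xs ys. xs \<longlonglongrightarrow> x \<and> (\<lambda>n. f (xs n)) \<longlonglongrightarrow> f x \<and> ys \<longlonglongrightarrow> y
              \<and> (\<forall>n. ys n \<in> frechet_subdiff f (xs n))}
      else {})"

definition linear_isometry :: "('a::real_normed_vector \<Rightarrow> 'b::real_normed_vector) \<Rightarrow> bool" where
  "linear_isometry L \<longleftrightarrow> linear L \<and> (\<forall>x. norm (L x) = norm x)"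

definition isometric_group_action ::
  "('s, 'm) monoid_scheme \<Rightarrow> ('s \<Rightarrow> 'x::euclidean_space \<Rightarrow> 'x) \<Rightarrow> bool" where
  "isometric_group_action G act \<longleftrightarrow>
     group G \<and> (\<forall>x. act \<one>\<^bsub>G\<^esub> x = x)
     \<and> (\<forall>s\<in>carrier G. \<forall>t\<in>carrier G. \<forall>x. act (s \<otimes>\<^bsub>G\<^esub> t) x = act s (act t x))
     \<and> (\<forall>s\<in>carrier G. linear_isometry (act s))"

definition spectral_decomposition_system ::
  "('s, 'm) monoid_scheme \<Rightarrow> ('s \<Rightarrow> 'x::euclidean_space \<Rightarrow> 'x) \<Rightarrow> ('h::euclidean_space \<Rightarrow> 'x)
    \<Rightarrow> 'i set \<Rightarrow> ('i \<Rightarrow> 'x \<Rightarrow> 'h) \<Rightarrow> bool" where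
  "spectral_decomposition_system G act \<gamma> A \<Lambda> \<longleftrightarrow>
     isometric_group_action G act
     \<and> (\<forall>a\<in>A. linear_isometry (\<Lambda> a))
     \<and> (\<exists>\<tau>. (\<forall>s\<in>carrier G. \<forall>x. \<tau> (act s x) = \<tau> x)
            \<and> (\<forall>x. \<exists>s\<in>carrier G. \<tau> x = act s x)
            \<and> (\<forall>a\<in>A. \<gamma> \<circ> \<Lambda> a = \<tau>))
     \<and> (\<forall>X. \<exists>a\<in>A. X = \<Lambda> a (\<gamma> X))
     \<and> (\<forall>X Y. inner X Y \<le> inner (\<gamma> X) (\<gamma> Y))"

definition index_set_at :: "'i set \<Rightarrow> ('i \<Rightarrow> 'x \<Rightarrow> 'h) \<Rightarrow> ('h \<Rightarrow> 'x) \<Rightarrow> 'h \<Rightarrow> 'i set" where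
  "index_set_at A \<Lambda> \<gamma> X = {a\<in>A. X = \<Lambda> a (\<gamma> X)}"

definition S_invariant :: "('s, 'm) monoid_scheme \<Rightarrow> ('s \<Rightarrow> 'x \<Rightarrow> 'x) \<Rightarrow> ('x \<Rightarrow> 'c) \<Rightarrow> bool" where
  "S_invariant G act \<phi> \<longleftrightarrow> (\<forall>s\<in>carrier G. \<forall>x. \<phi> (act s x) = \<phi> x)"

end

theory Submission
  imports Defs
begin


lemma frechet_quot:
  fixes f :: "'a::euclidean_space \<Rightarrow> ereal"
  assumes "d > 0"
  shows "(f z - ereal v - ereal i) / ereal d =
     (case f z of ereal w \<Rightarrow> ereal ((w - v - i) / d) | PInfty \<Rightarrow> \<infinity> | MInfty \<Rightarrow> - \<infinity>)"
  using assms by (cases "f z") auto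

lemma frechet_iff:
  fixes f :: "'a::euclidean_space \<Rightarrow> ereal"
  assumes fx: "f x = ereal v"
  shows "y \<in> frechet_subdiff f x \<longleftrightarrow>
    (\<forall>e>0. \<exists>r>0. \<forall>z. norm (z - x) < r \<longrightarrow> f z \<ge> ereal (v + inner (z - x) y - e * norm (z - x)))"
    (is "?L \<longleftrightarrow> ?R")
proof -
  define g where "g z = (f z - f x - ereal (inner (z - x) y)) / ereal (norm (z - x))" for z
  have L: "?L \<longleftrightarrow> 0 \<le> Liminf (at x) g"
    using fx unfolding frechet_subdiff_def g_def by simp
  have key: "g z > ereal (- e) \<longleftrightarrow> f z > ereal (v + inner (z - x) y - e * norm (z - x))"
    if "z \<noteq> x" for z e
  proof -
    have d: "norm (z - x) > 0" using that by simp
    have "g z = (f z - ereal v - ereal (inner (z - x) y)) / ereal (norm (z - x))"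
      using fx g_def by simp
    also have "\<dots> = (case f z of ereal w \<Rightarrow> ereal ((w - v - inner (z - x) y) / norm (z - x)) | PInfty \<Rightarrow> \<infinity> | MInfty \<Rightarrow> - \<infinity>)"
      by (rule frechet_quot[OF d])
    finally show ?thesis using d
      by (cases "f z") (auto simp: field_simps)
  qed
  show ?thesis
  proof
    assume ?L
    hence lim: "0 \<le> Liminf (at x) g" using L by simp
    show ?R
    proof (intro allI impI)
      fix e :: real assume e: "e > 0"
      have "eventually (\<lambda>z. ereal (- e) < g z) (at x)"
        using lim le_Liminf_iff[of 0 "at x" g] e by auto
      then obtain r where r: "r > 0" "\<And>z. z \<noteq> x \<Longrightarrow> dist z x < r \<Longrightarrow> ereal (- e) < g z"
        unfolding eventually_at by auto
      show "\<exists>r>0. \<forall>z. norm (z - x) < r \<longrightarrow> f z \<ge> ereal (v + inner (z - x) y - e * norm (z - x))"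
      proof (intro exI[of _ r] conjI allI impI)
        fix z assume z: "norm (z - x) < r"
        show "f z \<ge> ereal (v + inner (z - x) y - e * norm (z - x))"
        proof (cases "z = x")
          case True thus ?thesis using fx by simp
        next
          case False
          thus ?thesis using key[OF False, of e] r(2)[OF False] z by (simp add: dist_norm)
        qed
      qed (use r in auto)
    qed
  next
    assume R: ?R
    have "0 \<le> Liminf (at x) g"
      unfolding le_Liminf_iff
    proof (intro allI impI)
      fix c :: ereal assume c: "c < 0"
      obtain e where e: "e > 0" "c < ereal (- e)"
      proof (cases c)
        case (real r) thus ?thesis using c that[of "- r / 2"] by auto
      next
        case PInf thus ?thesis using c by auto
      next
        case MInf thus ?thesis using that[of 1] by auto
      qed
      obtain r where r: "r > 0" "\<And>z. norm (z - x) < r \<Longrightarrow> f z \<ge> ereal (v + inner (z - x) y - (e/2) * norm (z - x))"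
        using R e(1) by (meson half_gt_zero)
      show "eventually (\<lambda>z. c < g z) (at x)"
        unfolding eventually_at
      proof (intro exI[of _ r] conjI ballI impI)
        fix z assume z: "z \<noteq> x \<and> dist z x < r"
        hence nz: "norm (z - x) > 0" by simp
        have "ereal (v + inner (z - x) y - e * norm (z - x)) < ereal (v + inner (z - x) y - (e/2) * norm (z - x))"
          using nz e(1) by simp
        also have "\<dots> \<le> f z" using r(2) z by (simp add: dist_norm)
        finally have "g z > ereal (- e)" using key[of z e] z by simp
        thus "c < g z" using e(2) by simp
      qed (use r in auto)
    qed
    thus ?L using L by simp
  qed
qed



lemma lin_iso_inner:
  fixes L :: "'b::real_inner \<Rightarrow> 'a::real_inner"
  assumes "linear_isometry L"
  shows "inner (L u) (L v) = inner u v"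
proof -
  have lin: "linear L" and n: "\<And>x. norm (L x) = norm x" using assms unfolding linear_isometry_def by auto
  have pol: "inner p q = (norm (p + q)^2 - norm p^2 - norm q^2) / 2" for p q :: 'a
    by (simp add: power2_norm_eq_inner inner_add_left inner_add_right inner_commute)
  have pol2: "inner p q = (norm (p + q)^2 - norm p^2 - norm q^2) / 2" for p q :: 'b
    by (simp add: power2_norm_eq_inner inner_add_left inner_add_right inner_commute)
  have "L u + L v = L (u + v)" using lin by (simp add: linear_add)
  thus ?thesis using pol[of "L u" "L v"] pol2[of u v] n by simp
qed

lemma lin_iso_diff:
  assumes "linear_isometry L"
  shows "L u - L v = L (u - v)" "norm (L u - L v) = norm (u - v)"
  using assms unfolding linear_isometry_def by (metis linear_diff)+

locale sdsl =
  fixes G :: "('s,'m) monoid_scheme" and act :: "'s \<Rightarrow> 'x::euclidean_space \<Rightarrow> 'x"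
    and \<gamma> :: "'h::euclidean_space \<Rightarrow> 'x" and A :: "'i set" and \<Lambda> :: "'i \<Rightarrow> 'x \<Rightarrow> 'h"
    and \<tau> :: "'x \<Rightarrow> 'x" and \<phi> :: "'x \<Rightarrow> ereal"
  assumes grp: "group G"
  and act_one: "\<And>x. act \<one>\<^bsub>G\<^esub> x = x"
  and act_mult: "\<And>s t x. s \<in> carrier G \<Longrightarrow> t \<in> carrier G \<Longrightarrow> act (s \<otimes>\<^bsub>G\<^esub> t) x = act s (act t x)"
  and act_iso: "\<And>s. s \<in> carrier G \<Longrightarrow> linear_isometry (act s)"
  and Lam_iso: "\<And>a. a \<in> A \<Longrightarrow> linear_isometry (\<Lambda> a)"
  and tau_inv: "\<And>s x. s \<in> carrier G \<Longrightarrow> \<tau> (act s x) = \<tau> x"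
  and tau_orb: "\<And>x. \<exists>s\<in>carrier G. \<tau> x = act s x"
  and gam_Lam: "\<And>a. a \<in> A \<Longrightarrow> \<gamma> \<circ> \<Lambda> a = \<tau>"
  and decomp: "\<And>X. \<exists>a\<in>A. X = \<Lambda> a (\<gamma> X)"
  and ineq: "\<And>X Y. inner X Y \<le> inner (\<gamma> X) (\<gamma> Y)"
  and phi_inv: "\<And>s x. s \<in> carrier G \<Longrightarrow> \<phi> (act s x) = \<phi> x"
begin

lemma act_inv: "s \<in> carrier G \<Longrightarrow> act (inv\<^bsub>G\<^esub> s) (act s v) = v"
  using act_mult[of "inv\<^bsub>G\<^esub> s" s v] act_one grp by (simp add: group.l_inv group.inv_closed)

lemma act_inv2: "s \<in> carrier G \<Longrightarrow> act s (act (inv\<^bsub>G\<^esub> s) v) = v"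
  using act_mult[of s "inv\<^bsub>G\<^esub> s" v] act_one grp by (simp add: group.r_inv group.inv_closed)

lemma Lam_gam: "a \<in> A \<Longrightarrow> \<gamma> (\<Lambda> a x) = \<tau> x"
  using gam_Lam by (metis comp_apply)

lemma A_ne: "A \<noteq> {}" using decomp by blast

lemma norm_gam: "norm (\<gamma> X) = norm X"
proof -
  obtain a where a: "a \<in> A" "X = \<Lambda> a (\<gamma> X)" using decomp by blast
  have "norm (\<Lambda> a (\<gamma> X)) = norm (\<gamma> X)" using Lam_iso[OF a(1)] unfolding linear_isometry_def by auto
  thus ?thesis using a by simp
qed

lemma gam_nonexp: "norm (\<gamma> X - \<gamma> Y) \<le> norm (X - Y)"
proof -
  have "norm (\<gamma> X - \<gamma> Y)^2 = norm (\<gamma> X)^2 + norm (\<gamma> Y)^2 - 2 * inner (\<gamma> X) (\<gamma> Y)"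
    by (simp add: power2_norm_eq_inner inner_diff_left inner_diff_right inner_commute)
  also have "\<dots> \<le> norm X^2 + norm Y^2 - 2 * inner X Y" using ineq[of X Y] norm_gam by simp
  also have "\<dots> = norm (X - Y)^2"
    by (simp add: power2_norm_eq_inner inner_diff_left inner_diff_right inner_commute)
  finally show ?thesis by (meson norm_ge_zero power2_le_imp_le)
qed

lemma gam_tendsto: "(f \<longlongrightarrow> l) F \<Longrightarrow> ((\<lambda>n. \<gamma> (f n)) \<longlongrightarrow> \<gamma> l) F"
  unfolding tendsto_iff
proof (intro allI impI)
  fix e :: real assume "\<forall>e>0. \<forall>\<^sub>F x in F. dist (f x) l < e" "e > 0"
  hence "\<forall>\<^sub>F x in F. dist (f x) l < e" by blast
  thus "\<forall>\<^sub>F x in F. dist (\<gamma> (f x)) (\<gamma> l) < e"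
  proof (rule eventually_mono)
    fix x assume "dist (f x) l < e"
    thus "dist (\<gamma> (f x)) (\<gamma> l) < e" using gam_nonexp[of "f x" l] by (simp add: dist_norm)
  qed
qed

lemma tau_gam: "\<tau> (\<gamma> X) = \<gamma> X"
proof -
  obtain a where a: "a \<in> A" "X = \<Lambda> a (\<gamma> X)" using decomp by blast
  have "\<gamma> X = \<gamma> (\<Lambda> a (\<gamma> X))" using a(2) by (rule arg_cong)
  also have "\<dots> = \<tau> (\<gamma> X)" by (rule Lam_gam[OF a(1)])
  finally show ?thesis by simp
qed

lemma tau_ineq: "inner u v \<le> inner (\<tau> u) (\<tau> v)"
proof -
  obtain a where a: "a \<in> A" using A_ne by blast
  have "inner u v = inner (\<Lambda> a u) (\<Lambda> a v)" using lin_iso_inner[OF Lam_iso[OF a]] by simp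
  also have "\<dots> \<le> inner (\<gamma> (\<Lambda> a u)) (\<gamma> (\<Lambda> a v))" by (rule ineq)
  finally show ?thesis using Lam_gam[OF a] by simp
qed

lemma tau_nonexp: "norm (\<tau> u - \<tau> v) \<le> norm (u - v)"
proof -
  obtain a where a: "a \<in> A" using A_ne by blast
  have "norm (\<tau> u - \<tau> v) = norm (\<gamma> (\<Lambda> a u) - \<gamma> (\<Lambda> a v))" using Lam_gam[OF a] by simp
  also have "\<dots> \<le> norm (\<Lambda> a u - \<Lambda> a v)" by (rule gam_nonexp)
  also have "\<dots> = norm (u - v)" using lin_iso_diff[OF Lam_iso[OF a]] by simp
  finally show ?thesis .
qed

lemma phi_tau: "\<phi> (\<tau> x) = \<phi> x"
  using tau_orb[of x] phi_inv by metis

lemma psi_Lam: "a \<in> A \<Longrightarrow> \<phi> (\<gamma> (\<Lambda> a x)) = \<phi> x"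
  using Lam_gam phi_tau by simp

lemma inner_act: "s \<in> carrier G \<Longrightarrow> inner (act s u) (act s v) = inner u v"
  using lin_iso_inner[OF act_iso] by simp

end

context sdsl begin

lemma frechet_finite: "y \<in> frechet_subdiff f x \<Longrightarrow> \<exists>v. f x = ereal v"
  unfolding frechet_subdiff_def by (cases "f x") (auto split: if_splits)

lemma F_sup:
  assumes a: "a \<in> A" and y: "y \<in> frechet_subdiff \<phi> x"
  shows "\<Lambda> a y \<in> frechet_subdiff (\<phi> \<circ> \<gamma>) (\<Lambda> a x)"
proof -
  obtain v where v: "\<phi> x = ereal v" using frechet_finite[OF y] by blast
  define X' where "X' = \<Lambda> a x"
  have psiX: "(\<phi> \<circ> \<gamma>) X' = ereal v" using psi_Lam[OF a] v X'_def by simp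
  have Liso: "linear_isometry (\<Lambda> a)" using Lam_iso[OF a] .
  have Llin: "linear (\<Lambda> a)" using Liso unfolding linear_isometry_def by auto
  have yF: "\<forall>e>0. \<exists>r>0. \<forall>w. norm (w - x) < r \<longrightarrow> \<phi> w \<ge> ereal (v + inner (w - x) y - e * norm (w - x))"
    using y frechet_iff[of \<phi> x v, OF v] by blast
  show ?thesis
    unfolding X'_def[symmetric] frechet_iff[of "\<phi> \<circ> \<gamma>" X' v, OF psiX]
  proof (intro allI impI)
    fix e :: real assume e: "e > 0"
    define M where "M = 1 + 2 * norm y / e"
    have M: "M \<ge> 1" using e by (simp add: M_def)
    define eps where "eps = e / (2 * M)"
    have eps: "eps > 0" using e M by (simp add: eps_def)
    obtain r where r: "r > 0" "\<And>w. norm (w - x) < r \<Longrightarrow> \<phi> w \<ge> ereal (v + inner (w - x) y - eps * norm (w - x))"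
      using yF eps by blast
    show "\<exists>r>0. \<forall>Z. norm (Z - X') < r \<longrightarrow> (\<phi> \<circ> \<gamma>) Z \<ge> ereal (v + inner (Z - X') (\<Lambda> a y) - e * norm (Z - X'))"
    proof (intro exI[of _ "r / M"] conjI allI impI)
      show "r / M > 0" using r M by simp
    next
      fix Z assume Z: "norm (Z - X') < r / M"
      show "(\<phi> \<circ> \<gamma>) Z \<ge> ereal (v + inner (Z - X') (\<Lambda> a y) - e * norm (Z - X'))"
      proof (cases "Z = X'")
        case True thus ?thesis using psiX by simp
      next
        case False
        define d where "d = norm (Z - X')"
        have d: "d > 0" using False d_def by simp
        define t where "t = d / e"
        have t: "t > 0" using d e t_def by simp
        obtain s where s: "s \<in> carrier G" "\<tau> (x + t *\<^sub>R y) = act s (x + t *\<^sub>R y)" using tau_orb by blast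
        have slin: "linear (act s)" and snorm: "\<And>u. norm (act s u) = norm u"
          using act_iso[OF s(1)] unfolding linear_isometry_def by auto
        define w where "w = act (inv\<^bsub>G\<^esub> s) (\<gamma> Z)"
        have w1: "act s w = \<gamma> Z" using act_inv2[OF s(1)] w_def by simp
        have w2: "\<phi> w = \<phi> (\<gamma> Z)" using phi_inv[OF s(1), of w] w1 by simp
        have sdiff: "act s (w - x) = \<gamma> Z - act s x" using slin w1 by (simp add: linear_diff)
        have w3: "inner (w - x) y = inner (\<gamma> Z - act s x) (act s y)"
          using inner_act[OF s(1), of "w - x" y] sdiff by simp
        have w4: "norm (w - x) = norm (\<gamma> Z - act s x)" using snorm[of "w - x"] sdiff by simp
        have tx: "\<tau> (x + t *\<^sub>R y) = act s x + t *\<^sub>R act s y"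
          using s(2) slin by (simp add: linear_add linear_scale)
        have e5: "t * inner (\<gamma> Z - act s x) (act s y)
            = inner (\<gamma> Z) (\<tau> (x + t *\<^sub>R y)) - inner (\<gamma> Z) (act s x) - t * inner x y"
        proof -
          have "inner (act s x) (act s x) = inner x x" "inner (act s x) (act s y) = inner x y"
            using inner_act[OF s(1)] by auto
          thus ?thesis unfolding tx
            by (simp add: inner_diff_left inner_add_right algebra_simps)
        qed
        have e6: "inner Z (\<Lambda> a (x + t *\<^sub>R y)) \<le> inner (\<gamma> Z) (\<tau> (x + t *\<^sub>R y))"
          using ineq[of Z "\<Lambda> a (x + t *\<^sub>R y)"] Lam_gam[OF a] by simp
        have e7: "inner Z (\<Lambda> a (x + t *\<^sub>R y)) = inner Z X' + t * inner Z (\<Lambda> a y)"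
          using Llin unfolding X'_def by (simp add: linear_add linear_scale inner_add_right)
        have e8: "inner (\<gamma> Z) (act s x) \<le> inner (\<gamma> Z) (\<tau> x)"
          using tau_ineq[of "\<gamma> Z" "act s x"] tau_gam tau_inv[OF s(1)] by simp
        have e9: "\<tau> x = \<gamma> X'" using Lam_gam[OF a] X'_def by simp
        have e10: "inner (\<gamma> Z) (\<gamma> X') - inner Z X' \<le> d^2 / 2"
        proof -
          have a1: "norm (\<gamma> Z - \<gamma> X')^2 = norm (\<gamma> Z)^2 + norm (\<gamma> X')^2 - 2 * inner (\<gamma> Z) (\<gamma> X')"
            by (simp add: power2_norm_eq_inner inner_diff_left inner_diff_right inner_commute)
          have a2: "d^2 = norm Z^2 + norm X'^2 - 2 * inner Z X'" unfolding d_def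
            by (simp add: power2_norm_eq_inner inner_diff_left inner_diff_right inner_commute)
          have "norm (\<gamma> Z - \<gamma> X')^2 \<ge> 0" by simp
          thus ?thesis using a1 a2 norm_gam[of Z] norm_gam[of X'] by simp
        qed
        have e11: "inner X' (\<Lambda> a y) = inner x y" using lin_iso_inner[OF Liso] X'_def by simp
        have m1: "t * inner (w - x) y = inner (\<gamma> Z) (\<tau> (x + t *\<^sub>R y)) - inner (\<gamma> Z) (act s x) - t * inner x y"
          using w3 e5 by simp
        have m2: "t * inner (Z - X') (\<Lambda> a y) = t * inner Z (\<Lambda> a y) - t * inner x y"
          using e11 by (simp add: inner_diff_left algebra_simps)
        have main: "t * inner (w - x) y \<ge> t * inner (Z - X') (\<Lambda> a y) - d^2 / 2"
        proof -
          have e8': "inner (\<gamma> Z) (act s x) \<le> inner (\<gamma> Z) (\<gamma> X')" using e8 e9 by simp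
          show ?thesis using m1 m2 e6 e7 e8' e10 by linarith
        qed
        have "t * (e * d / 2) = d^2 / 2" using e by (simp add: t_def power2_eq_square)
        hence "t * (inner (w - x) y - inner (Z - X') (\<Lambda> a y) + e * d / 2) \<ge> 0"
          using main by (simp add: algebra_simps)
        hence ip: "inner (w - x) y \<ge> inner (Z - X') (\<Lambda> a y) - e * d / 2"
          using t by (simp add: zero_le_mult_iff)
        have n1: "norm (\<gamma> Z - \<tau> x) \<le> d" using gam_nonexp[of Z X'] e9 d_def by simp
        have n2: "norm (\<tau> x - \<tau> (x + t *\<^sub>R y)) \<le> t * norm y"
          using tau_nonexp[of x "x + t *\<^sub>R y"] t by simp
        have n3: "norm (\<tau> (x + t *\<^sub>R y) - act s x) = t * norm y"
          using tx snorm[of y] t by simp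
        have eqv: "\<gamma> Z - act s x = (\<gamma> Z - \<tau> x) + ((\<tau> x - \<tau> (x + t *\<^sub>R y)) + (\<tau> (x + t *\<^sub>R y) - act s x))"
          by simp
        have tri1: "norm (\<gamma> Z - act s x) \<le> norm (\<gamma> Z - \<tau> x) + norm ((\<tau> x - \<tau> (x + t *\<^sub>R y)) + (\<tau> (x + t *\<^sub>R y) - act s x))"
          unfolding eqv by (rule norm_triangle_ineq)
        have tri2: "norm ((\<tau> x - \<tau> (x + t *\<^sub>R y)) + (\<tau> (x + t *\<^sub>R y) - act s x)) \<le> norm (\<tau> x - \<tau> (x + t *\<^sub>R y)) + norm (\<tau> (x + t *\<^sub>R y) - act s x)"
          by (rule norm_triangle_ineq)
        have dMeq: "d + 2 * (t * norm y) = d * M" using e by (simp add: M_def t_def field_simps)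
        have nw: "norm (w - x) \<le> d * M"
          using tri1 tri2 n1 n2 n3 w4 dMeq by linarith
        have dM: "d * M < r" using Z M d_def by (simp add: field_simps)
        have phw: "\<phi> w \<ge> ereal (v + inner (w - x) y - eps * norm (w - x))"
          using r(2) nw dM by simp
        have "eps * norm (w - x) \<le> eps * (d * M)" using nw eps by simp
        also have "eps * (d * M) = e * d / 2" using M by (simp add: eps_def field_simps)
        finally have "v + inner (Z - X') (\<Lambda> a y) - e * d \<le> v + inner (w - x) y - eps * norm (w - x)"
          using ip d e by simp
        hence "ereal (v + inner (Z - X') (\<Lambda> a y) - e * norm (Z - X')) \<le> \<phi> w"
          using phw d_def by (meson ereal_less_eq(3) order_trans)
        thus ?thesis using w2 by simp
      qed
    qed
  qed
qed

end

context sdsl begin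

lemma Lam_lin: "a \<in> A \<Longrightarrow> linear (\<Lambda> a)"
  using Lam_iso unfolding linear_isometry_def by auto

lemma Lam_norm: "a \<in> A \<Longrightarrow> norm (\<Lambda> a u) = norm u"
  using Lam_iso unfolding linear_isometry_def by auto

lemma Lam_blin: "a \<in> A \<Longrightarrow> blinfun_apply (Blinfun (\<Lambda> a)) = \<Lambda> a"
  using Lam_lin linear_conv_bounded_linear bounded_linear_Blinfun_apply by blast

lemma F_chain:
  assumes a: "a \<in> A" and Y: "\<Lambda> a y \<in> frechet_subdiff (\<phi> \<circ> \<gamma>) (\<Lambda> a x)"
  shows "y \<in> frechet_subdiff \<phi> x"
proof -
  obtain v where v: "(\<phi> \<circ> \<gamma>) (\<Lambda> a x) = ereal v" using frechet_finite[OF Y] by blast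
  have vx: "\<phi> x = ereal v" using v psi_Lam[OF a] by simp
  have YF: "\<forall>e>0. \<exists>r>0. \<forall>W. norm (W - \<Lambda> a x) < r \<longrightarrow> (\<phi> \<circ> \<gamma>) W \<ge> ereal (v + inner (W - \<Lambda> a x) (\<Lambda> a y) - e * norm (W - \<Lambda> a x))"
    using Y frechet_iff[of "\<phi> \<circ> \<gamma>" "\<Lambda> a x" v, OF v] by blast
  show ?thesis unfolding frechet_iff[of \<phi> x v, OF vx]
  proof (intro allI impI)
    fix e :: real assume e: "e > 0"
    then obtain r where r: "r > 0" "\<And>W. norm (W - \<Lambda> a x) < r \<Longrightarrow> (\<phi> \<circ> \<gamma>) W \<ge> ereal (v + inner (W - \<Lambda> a x) (\<Lambda> a y) - e * norm (W - \<Lambda> a x))"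
      using YF by blast
    show "\<exists>r>0. \<forall>z. norm (z - x) < r \<longrightarrow> \<phi> z \<ge> ereal (v + inner (z - x) y - e * norm (z - x))"
    proof (intro exI[of _ r] conjI allI impI)
      fix z assume z: "norm (z - x) < r"
      have d: "\<Lambda> a z - \<Lambda> a x = \<Lambda> a (z - x)" using Lam_lin[OF a] by (simp add: linear_diff)
      have n: "norm (\<Lambda> a z - \<Lambda> a x) = norm (z - x)" using d Lam_norm[OF a] by simp
      have i: "inner (\<Lambda> a z - \<Lambda> a x) (\<Lambda> a y) = inner (z - x) y"
        using d lin_iso_inner[OF Lam_iso[OF a]] by simp
      show "\<phi> z \<ge> ereal (v + inner (z - x) y - e * norm (z - x))"
        using r(2)[of "\<Lambda> a z"] z n i psi_Lam[OF a, of z] by simp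
    qed (use r in auto)
  qed
qed

lemma Lset_compact:
  assumes cl: "closed ((\<lambda>a. Blinfun (\<Lambda> a)) ` A)"
  shows "compact ((\<lambda>a. Blinfun (\<Lambda> a)) ` A)"
proof -
  have "bounded ((\<lambda>a. Blinfun (\<Lambda> a)) ` A)"
    unfolding bounded_iff
  proof (intro exI[of _ 1] ballI)
    fix B assume "B \<in> (\<lambda>a. Blinfun (\<Lambda> a)) ` A"
    then obtain a where a: "a \<in> A" "B = Blinfun (\<Lambda> a)" by blast
    show "norm B \<le> 1" unfolding a(2)
      by (rule norm_blinfun_bound) (simp_all add: Lam_blin[OF a(1)] Lam_norm[OF a(1)])
  qed
  thus ?thesis using cl compact_eq_bounded_closed by blast
qed


lemma F_sub:
  assumes cl: "closed ((\<lambda>a. Blinfun (\<Lambda> a)) ` A)"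
    and Y: "Y \<in> frechet_subdiff (\<phi> \<circ> \<gamma>) X"
  shows "\<exists>c\<in>A. X = \<Lambda> c (\<gamma> X) \<and> (\<exists>y. y \<in> frechet_subdiff \<phi> (\<gamma> X) \<and> Y = \<Lambda> c y)"
proof -
  obtain v where v: "(\<phi> \<circ> \<gamma>) X = ereal v" using frechet_finite[OF Y] by blast
  have YF: "\<forall>e>0. \<exists>r>0. \<forall>W. norm (W - X) < r \<longrightarrow> (\<phi> \<circ> \<gamma>) W \<ge> ereal (v + inner (W - X) Y - e * norm (W - X))"
    using Y frechet_iff[of "\<phi> \<circ> \<gamma>" X v, OF v] by blast
  define t where "t n = inverse (real (Suc n))" for n
  have tpos: "t n > 0" for n by (simp add: t_def)
  have t0: "t \<longlonglongrightarrow> 0" unfolding t_def by (rule LIMSEQ_inverse_real_of_nat)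
  define Xn where "Xn n = X + t n *\<^sub>R Y" for n
  have "\<forall>n. \<exists>c\<in>A. Xn n = \<Lambda> c (\<gamma> (Xn n))" using decomp by blast
  hence "\<exists>c. \<forall>n. c n \<in> A \<and> Xn n = \<Lambda> (c n) (\<gamma> (Xn n))" by (intro choice) blast
  then obtain c where c': "\<forall>n. c n \<in> A \<and> Xn n = \<Lambda> (c n) (\<gamma> (Xn n))" by blast
  hence c: "\<And>n. c n \<in> A" "\<And>n. Xn n = \<Lambda> (c n) (\<gamma> (Xn n))" by auto
  define yn where "yn n = inverse (t n) *\<^sub>R (\<gamma> (Xn n) - \<gamma> X)" for n
  have yn_bd: "norm (yn n) \<le> norm Y" for n
  proof -
    have "norm (\<gamma> (Xn n) - \<gamma> X) \<le> t n * norm Y"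
      using gam_nonexp[of "Xn n" X] tpos[of n] by (simp add: Xn_def)
    moreover have "norm (yn n) = norm (\<gamma> (Xn n) - \<gamma> X) / t n"
      using tpos[of n] by (simp add: yn_def divide_inverse mult.commute)
    ultimately show ?thesis using tpos[of n] by (simp add: divide_le_eq mult.commute)
  qed
  define Zn where "Zn n = \<Lambda> (c n) (\<gamma> X)" for n
  define d where "d n = norm (Zn n - X)" for n
  have psiZ: "(\<phi> \<circ> \<gamma>) (Zn n) = ereal v" for n
    using psi_Lam[OF c(1)[of n], of "\<gamma> X"] phi_tau tau_gam v unfolding Zn_def by simp
  have d_bd: "d n \<le> 2 * t n * norm Y" for n
  proof -
    have "Zn n - X = (\<Lambda> (c n) (\<gamma> X) - \<Lambda> (c n) (\<gamma> (Xn n))) + (Xn n - X)"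
      using c(2)[of n, symmetric] by (simp add: Zn_def)
    hence "d n \<le> norm (\<Lambda> (c n) (\<gamma> X) - \<Lambda> (c n) (\<gamma> (Xn n))) + norm (Xn n - X)"
      unfolding d_def by (simp only: norm_triangle_ineq)
    also have "norm (\<Lambda> (c n) (\<gamma> X) - \<Lambda> (c n) (\<gamma> (Xn n))) = norm (\<gamma> X - \<gamma> (Xn n))"
      using lin_iso_diff(2)[OF Lam_iso[OF c(1)]] by simp
    also have "\<dots> \<le> norm (X - Xn n)" by (rule gam_nonexp)
    finally show ?thesis using tpos[of n] by (simp add: Xn_def norm_minus_commute mult_ac)
  qed
  have key: "t n * inner (Zn n - X) Y \<ge> d n ^ 2 / 2" for n
  proof -
    have "inner (Zn n) (Xn n) = inner (\<gamma> X) (\<gamma> (Xn n))"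
    proof -
      have "inner (Zn n) (\<Lambda> (c n) (\<gamma> (Xn n))) = inner (\<gamma> X) (\<gamma> (Xn n))"
        unfolding Zn_def by (rule lin_iso_inner[OF Lam_iso[OF c(1)[of n]]])
      thus ?thesis using c(2)[of n, symmetric] by simp
    qed
    hence i1: "inner (Zn n) (Xn n) \<ge> inner X (Xn n)" using ineq[of X "Xn n"] by simp
    have nZ: "norm (Zn n) = norm X" using Lam_norm[OF c(1)] norm_gam by (simp add: Zn_def)
    have "d n ^ 2 = norm (Zn n)^2 + norm X^2 - 2 * inner (Zn n) X" unfolding d_def
      by (simp add: power2_norm_eq_inner inner_diff_left inner_diff_right inner_commute)
    hence dd: "inner (Zn n) X - inner X X = - (d n ^ 2 / 2)" using nZ by (simp add: power2_norm_eq_inner field_simps)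
    have "inner (Zn n) (Xn n) - inner X (Xn n) = inner (Zn n) X - inner X X + t n * inner (Zn n - X) Y"
      by (simp add: Xn_def inner_add_right inner_diff_left algebra_simps)
    thus ?thesis using i1 dd by linarith
  qed
  have dt: "(\<lambda>n. d n / t n) \<longlonglongrightarrow> 0"
    unfolding tendsto_iff
  proof (intro allI impI)
    fix e :: real assume e: "e > 0"
    obtain r where r: "r > 0" "\<And>W. norm (W - X) < r \<Longrightarrow> (\<phi> \<circ> \<gamma>) W \<ge> ereal (v + inner (W - X) Y - (e/4) * norm (W - X))"
    proof -
      have "e/4 > 0" using e by simp
      thus ?thesis using YF that by blast
    qed
    have "(\<lambda>n. 2 * t n * norm Y) \<longlonglongrightarrow> 2 * 0 * norm Y"
      by (intro tendsto_intros t0)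
    hence "eventually (\<lambda>n. 2 * t n * norm Y < r) sequentially"
      using r(1) by (simp add: order_tendstoD(2))
    thus "eventually (\<lambda>n. dist (d n / t n) 0 < e) sequentially"
    proof (rule eventually_mono)
      fix n assume "2 * t n * norm Y < r"
      hence dr: "d n < r" using d_bd[of n] by linarith
      have "ereal v \<ge> ereal (v + inner (Zn n - X) Y - (e/4) * d n)"
        using r(2)[of "Zn n"] dr psiZ[of n] unfolding d_def by simp
      hence ip: "inner (Zn n - X) Y \<le> (e/4) * d n" by simp
      have d0: "d n \<ge> 0" by (simp add: d_def)
      have "t n * inner (Zn n - X) Y \<le> t n * ((e/4) * d n)"
        by (rule mult_left_mono[OF ip less_imp_le[OF tpos[of n]]])
      hence "d n ^ 2 / 2 \<le> t n * ((e/4) * d n)" using key[of n] by linarith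
      hence h: "d n * d n \<le> d n * ((e/2) * t n)" by (simp add: power2_eq_square algebra_simps)
      have "d n \<le> (e/2) * t n"
      proof (cases "d n = 0")
        case True thus ?thesis using e tpos[of n] by simp
      next
        case False hence "d n > 0" using d0 by simp
        thus ?thesis using h by (simp add: mult_le_cancel_left_pos)
      qed
      hence "d n / t n \<le> e/2" using tpos[of n] by (simp add: divide_le_eq)
      moreover have "d n / t n \<ge> 0" using d0 tpos[of n] by simp
      moreover hence "dist (d n / t n) 0 = d n / t n" using d0 tpos[of n] by (simp add: dist_real_def)
      ultimately show "dist (d n / t n) 0 < e" using e by linarith
    qed
  qed
  have Yeq: "norm (Y - \<Lambda> (c n) (yn n)) = d n / t n" for n
  proof -
    have "\<Lambda> (c n) (yn n) = inverse (t n) *\<^sub>R (\<Lambda> (c n) (\<gamma> (Xn n)) - Zn n)"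
      using Lam_lin[OF c(1)[of n]] by (simp add: yn_def Zn_def linear_diff linear_scale)
    also have "\<dots> = inverse (t n) *\<^sub>R (Xn n - Zn n)" using c(2)[of n, symmetric] by simp
    also have "\<dots> = Y - inverse (t n) *\<^sub>R (Zn n - X)" using tpos[of n]
      by (simp add: Xn_def algebra_simps)
    finally have "Y - \<Lambda> (c n) (yn n) = inverse (t n) *\<^sub>R (Zn n - X)" by simp
    thus ?thesis using tpos[of n] by (simp add: d_def divide_inverse mult.commute)
  qed
  define K where "K = ((\<lambda>a. Blinfun (\<Lambda> a)) ` A) \<times> cball (0::'x) (norm Y)"
  have Kc: "compact K" unfolding K_def by (intro compact_Times Lset_compact[OF cl] compact_cball)
  have inK: "\<forall>n. (Blinfun (\<Lambda> (c n)), yn n) \<in> K" using c(1) yn_bd by (auto simp: K_def)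
  obtain l r where l: "l \<in> K" and r: "strict_mono r"
    and lim: "((\<lambda>n. (Blinfun (\<Lambda> (c n)), yn n)) \<circ> r) \<longlonglongrightarrow> l"
    using seq_compactE[OF compact_imp_seq_compact[OF Kc] inK] by blast
  obtain c0 y where c0: "c0 \<in> A" and ly: "l = (Blinfun (\<Lambda> c0), y)" using l by (auto simp: K_def)
  have limB: "(\<lambda>n. Blinfun (\<Lambda> (c (r n)))) \<longlonglongrightarrow> Blinfun (\<Lambda> c0)"
    using tendsto_fst[OF lim] ly by (simp add: o_def)
  have limy: "(\<lambda>n. yn (r n)) \<longlonglongrightarrow> y"
    using tendsto_snd[OF lim] ly by (simp add: o_def)
  have A1: "(\<lambda>n. \<Lambda> (c (r n)) (yn (r n))) \<longlonglongrightarrow> \<Lambda> c0 y"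
    using blinfun.tendsto[OF limB limy] Lam_blin c(1) c0 by simp
  have A2: "(\<lambda>n. Y - \<Lambda> (c (r n)) (yn (r n))) \<longlonglongrightarrow> 0"
  proof -
    have "(\<lambda>n. d (r n) / t (r n)) \<longlonglongrightarrow> 0" using LIMSEQ_subseq_LIMSEQ[OF dt r] by (simp add: o_def)
    hence "(\<lambda>n. norm (Y - \<Lambda> (c (r n)) (yn (r n)))) \<longlonglongrightarrow> 0" using Yeq by simp
    thus ?thesis by (simp add: tendsto_norm_zero_iff)
  qed
  have "(\<lambda>n. Y - \<Lambda> (c (r n)) (yn (r n))) \<longlonglongrightarrow> Y - \<Lambda> c0 y" by (intro tendsto_intros A1)
  hence "Y - \<Lambda> c0 y = 0" using A2 by (rule LIMSEQ_unique)
  hence Yc: "Y = \<Lambda> c0 y" by simp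
  have XnX: "Xn \<longlonglongrightarrow> X"
  proof -
    have "(\<lambda>n. X + t n *\<^sub>R Y) \<longlonglongrightarrow> X + 0 *\<^sub>R Y" by (intro tendsto_intros t0)
    thus ?thesis by (simp add: Xn_def[abs_def])
  qed
  have B1: "(\<lambda>n. Xn (r n)) \<longlonglongrightarrow> X" using LIMSEQ_subseq_LIMSEQ[OF XnX r] by (simp add: o_def)
  have "(\<lambda>n. \<gamma> (Xn (r n))) \<longlonglongrightarrow> \<gamma> X" by (rule gam_tendsto[OF B1])
  hence "(\<lambda>n. \<Lambda> (c (r n)) (\<gamma> (Xn (r n)))) \<longlonglongrightarrow> \<Lambda> c0 (\<gamma> X)"
    using blinfun.tendsto[OF limB] Lam_blin c(1) c0 by simp
  hence "(\<lambda>n. Xn (r n)) \<longlonglongrightarrow> \<Lambda> c0 (\<gamma> X)" using c(2)[symmetric] by simp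
  hence Xc: "X = \<Lambda> c0 (\<gamma> X)" using B1 by (rule LIMSEQ_unique[rotated])
  have "\<Lambda> c0 y \<in> frechet_subdiff (\<phi> \<circ> \<gamma>) (\<Lambda> c0 (\<gamma> X))" using Y Yc Xc by simp
  hence "y \<in> frechet_subdiff \<phi> (\<gamma> X)" by (rule F_chain[OF c0])
  thus ?thesis using c0 Xc Yc by blast
qed

end

context sdsl begin

lemma L_sub:
  assumes cl: "closed ((\<lambda>a. Blinfun (\<Lambda> a)) ` A)"
    and Y: "Y \<in> limiting_subdiff (\<phi> \<circ> \<gamma>) X"
  shows "\<exists>c\<in>A. X = \<Lambda> c (\<gamma> X) \<and> (\<exists>y. y \<in> limiting_subdiff \<phi> (\<gamma> X) \<and> Y = \<Lambda> c y)"
proof -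
  have fin: "\<bar>(\<phi> \<circ> \<gamma>) X\<bar> \<noteq> \<infinity>" using Y unfolding limiting_subdiff_def by (auto split: if_splits)
  obtain xs ys where xs: "xs \<longlonglongrightarrow> X" and fx: "(\<lambda>n. (\<phi> \<circ> \<gamma>) (xs n)) \<longlonglongrightarrow> (\<phi> \<circ> \<gamma>) X"
    and ys: "ys \<longlonglongrightarrow> Y" and yF: "\<And>n. ys n \<in> frechet_subdiff (\<phi> \<circ> \<gamma>) (xs n)"
    using Y fin unfolding limiting_subdiff_def by auto
  have "\<forall>n. \<exists>c\<in>A. xs n = \<Lambda> c (\<gamma> (xs n)) \<and> (\<exists>y. y \<in> frechet_subdiff \<phi> (\<gamma> (xs n)) \<and> ys n = \<Lambda> c y)"
    using F_sub[OF cl yF] by blast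
  hence "\<exists>c y. \<forall>n. c n \<in> A \<and> xs n = \<Lambda> (c n) (\<gamma> (xs n)) \<and> y n \<in> frechet_subdiff \<phi> (\<gamma> (xs n)) \<and> ys n = \<Lambda> (c n) (y n)"
    by metis
  then obtain c y where cy: "\<forall>n. c n \<in> A \<and> xs n = \<Lambda> (c n) (\<gamma> (xs n)) \<and> y n \<in> frechet_subdiff \<phi> (\<gamma> (xs n)) \<and> ys n = \<Lambda> (c n) (y n)"
    by blast
  hence c: "\<And>n. c n \<in> A" and cx: "\<And>n. xs n = \<Lambda> (c n) (\<gamma> (xs n))"
    and yF': "\<And>n. y n \<in> frechet_subdiff \<phi> (\<gamma> (xs n))" and cyy: "\<And>n. ys n = \<Lambda> (c n) (y n)" by auto
  obtain Kb where Kb: "\<And>n. norm (ys n) \<le> Kb"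
  proof -
    have "convergent ys" using ys by (auto simp: convergent_def)
    hence "Bseq ys" by (rule convergent_imp_Bseq)
    thus ?thesis using that unfolding Bseq_def by auto
  qed
  have ybd: "norm (y n) \<le> Kb" for n using Kb[of n] cyy[of n] Lam_norm[OF c] by simp
  define K where "K = ((\<lambda>a. Blinfun (\<Lambda> a)) ` A) \<times> cball (0::'x) Kb"
  have Kc: "compact K" unfolding K_def by (intro compact_Times Lset_compact[OF cl] compact_cball)
  have inK: "\<forall>n. (Blinfun (\<Lambda> (c n)), y n) \<in> K" using c ybd by (auto simp: K_def)
  obtain l r where l: "l \<in> K" and r: "strict_mono r"
    and lim: "((\<lambda>n. (Blinfun (\<Lambda> (c n)), y n)) \<circ> r) \<longlonglongrightarrow> l"
    using seq_compactE[OF compact_imp_seq_compact[OF Kc] inK] by blast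
  obtain c0 y0 where c0: "c0 \<in> A" and ly: "l = (Blinfun (\<Lambda> c0), y0)" using l by (auto simp: K_def)
  have limB: "(\<lambda>n. Blinfun (\<Lambda> (c (r n)))) \<longlonglongrightarrow> Blinfun (\<Lambda> c0)"
    using tendsto_fst[OF lim] ly by (simp add: o_def)
  have limy: "(\<lambda>n. y (r n)) \<longlonglongrightarrow> y0"
    using tendsto_snd[OF lim] ly by (simp add: o_def)
  have "(\<lambda>n. \<Lambda> (c (r n)) (y (r n))) \<longlonglongrightarrow> \<Lambda> c0 y0"
    using blinfun.tendsto[OF limB limy] Lam_blin c c0 by simp
  hence "(\<lambda>n. ys (r n)) \<longlonglongrightarrow> \<Lambda> c0 y0" using cyy by simp
  moreover have "(\<lambda>n. ys (r n)) \<longlonglongrightarrow> Y" using LIMSEQ_subseq_LIMSEQ[OF ys r] by (simp add: o_def)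
  ultimately have Yc: "Y = \<Lambda> c0 y0" by (rule LIMSEQ_unique[rotated])
  have B1: "(\<lambda>n. xs (r n)) \<longlonglongrightarrow> X" using LIMSEQ_subseq_LIMSEQ[OF xs r] by (simp add: o_def)
  have g1: "(\<lambda>n. \<gamma> (xs (r n))) \<longlonglongrightarrow> \<gamma> X" by (rule gam_tendsto[OF B1])
  hence "(\<lambda>n. \<Lambda> (c (r n)) (\<gamma> (xs (r n)))) \<longlonglongrightarrow> \<Lambda> c0 (\<gamma> X)"
    using blinfun.tendsto[OF limB] Lam_blin c c0 by simp
  hence "(\<lambda>n. xs (r n)) \<longlonglongrightarrow> \<Lambda> c0 (\<gamma> X)" using cx[symmetric] by simp
  hence Xc: "X = \<Lambda> c0 (\<gamma> X)" using B1 by (rule LIMSEQ_unique[rotated])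
  have f2: "(\<lambda>n. \<phi> (\<gamma> (xs (r n)))) \<longlonglongrightarrow> \<phi> (\<gamma> X)"
    using LIMSEQ_subseq_LIMSEQ[OF fx r] by (simp add: o_def)
  have fin': "\<bar>\<phi> (\<gamma> X)\<bar> \<noteq> \<infinity>" using fin by simp
  have ex: "\<exists>xs ys. xs \<longlonglongrightarrow> \<gamma> X \<and> (\<lambda>n. \<phi> (xs n)) \<longlonglongrightarrow> \<phi> (\<gamma> X) \<and> ys \<longlonglongrightarrow> y0
              \<and> (\<forall>n. ys n \<in> frechet_subdiff \<phi> (xs n))"
    using g1 f2 limy yF' by blast
  have "y0 \<in> limiting_subdiff \<phi> (\<gamma> X)"
    unfolding limiting_subdiff_def using fin' ex by simp
  thus ?thesis using c0 Xc Yc by blast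
qed

lemma L_sup:
  assumes a: "a \<in> A" and Xa: "X = \<Lambda> a (\<gamma> X)" and y: "y \<in> limiting_subdiff \<phi> (\<gamma> X)"
  shows "\<Lambda> a y \<in> limiting_subdiff (\<phi> \<circ> \<gamma>) X"
proof -
  have fin: "\<bar>\<phi> (\<gamma> X)\<bar> \<noteq> \<infinity>" using y unfolding limiting_subdiff_def by (auto split: if_splits)
  obtain xs ys where xs: "xs \<longlonglongrightarrow> \<gamma> X" and fx: "(\<lambda>n. \<phi> (xs n)) \<longlonglongrightarrow> \<phi> (\<gamma> X)"
    and ys: "ys \<longlonglongrightarrow> y" and yF: "\<And>n. ys n \<in> frechet_subdiff \<phi> (xs n)"
    using y fin unfolding limiting_subdiff_def by auto
  have bl: "bounded_linear (\<Lambda> a)" using Lam_lin[OF a] linear_conv_bounded_linear by blast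
  have x1: "(\<lambda>n. \<Lambda> a (xs n)) \<longlonglongrightarrow> X"
    using bounded_linear.tendsto[OF bl xs] Xa[symmetric] by simp
  have y1: "(\<lambda>n. \<Lambda> a (ys n)) \<longlonglongrightarrow> \<Lambda> a y"
    using bounded_linear.tendsto[OF bl ys] by simp
  have f1: "(\<lambda>n. (\<phi> \<circ> \<gamma>) (\<Lambda> a (xs n))) \<longlonglongrightarrow> (\<phi> \<circ> \<gamma>) X"
    using fx psi_Lam[OF a] by simp
  have m: "\<And>n. \<Lambda> a (ys n) \<in> frechet_subdiff (\<phi> \<circ> \<gamma>) (\<Lambda> a (xs n))"
    by (rule F_sup[OF a yF])
  have fin': "\<bar>(\<phi> \<circ> \<gamma>) X\<bar> \<noteq> \<infinity>" using fin by simp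
  have ex: "\<exists>xs ys. xs \<longlonglongrightarrow> X \<and> (\<lambda>n. (\<phi> \<circ> \<gamma>) (xs n)) \<longlonglongrightarrow> (\<phi> \<circ> \<gamma>) X \<and> ys \<longlonglongrightarrow> \<Lambda> a y
              \<and> (\<forall>n. ys n \<in> frechet_subdiff (\<phi> \<circ> \<gamma>) (xs n))"
    using x1 y1 f1 m by blast
  show ?thesis
    unfolding limiting_subdiff_def using fin' ex by simp
qed

end

theorem theorem4p1:
  fixes G :: "('s, 'm) monoid_scheme"
    and act :: "'s \<Rightarrow> 'x::euclidean_space \<Rightarrow> 'x"
    and \<gamma> :: "'h::euclidean_space \<Rightarrow> 'x"
    and A :: "'i set"
    and \<Lambda> :: "'i \<Rightarrow> 'x \<Rightarrow> 'h"
    and \<phi> :: "'x \<Rightarrow> ereal"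
    and X :: 'h
  assumes sds: "spectral_decomposition_system G act \<gamma> A \<Lambda>"
    and closed_Lambda: "closed ((\<lambda>a. Blinfun (\<Lambda> a)) ` A)"
    and inv: "S_invariant G act \<phi>"
  shows "(frechet_subdiff (\<phi> \<circ> \<gamma>) X =
           {\<Lambda> a y | a y. y \<in> frechet_subdiff \<phi> (\<gamma> X) \<and> a \<in> index_set_at A \<Lambda> \<gamma> X})
       \<and> (limiting_subdiff (\<phi> \<circ> \<gamma>) X =
           {\<Lambda> a y | a y. y \<in> limiting_subdiff \<phi> (\<gamma> X) \<and> a \<in> index_set_at A \<Lambda> \<gamma> X})"
proof -
  obtain \<tau> where tau: "\<forall>s\<in>carrier G. \<forall>x. \<tau> (act s x) = \<tau> x"
      "\<forall>x. \<exists>s\<in>carrier G. \<tau> x = act s x" "\<forall>a\<in>A. \<gamma> \<circ> \<Lambda> a = \<tau>"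
    using sds unfolding spectral_decomposition_system_def by blast
  interpret sdsl G act \<gamma> A \<Lambda> \<tau> \<phi>
    using sds tau inv
    unfolding spectral_decomposition_system_def isometric_group_action_def S_invariant_def
    by (intro sdsl.intro) auto
  show ?thesis
  proof (intro conjI equalityI subsetI)
    fix Y assume "Y \<in> frechet_subdiff (\<phi> \<circ> \<gamma>) X"
    then obtain c y where "c \<in> A" "X = \<Lambda> c (\<gamma> X)" "y \<in> frechet_subdiff \<phi> (\<gamma> X)" "Y = \<Lambda> c y"
      using F_sub[OF closed_Lambda] by blast
    thus "Y \<in> {\<Lambda> a y | a y. y \<in> frechet_subdiff \<phi> (\<gamma> X) \<and> a \<in> index_set_at A \<Lambda> \<gamma> X}"
      unfolding index_set_at_def by blast
  next
    fix Y assume "Y \<in> {\<Lambda> a y | a y. y \<in> frechet_subdiff \<phi> (\<gamma> X) \<and> a \<in> index_set_at A \<Lambda> \<gamma> X}"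
    then obtain a y where a: "a \<in> A" "X = \<Lambda> a (\<gamma> X)" and y: "y \<in> frechet_subdiff \<phi> (\<gamma> X)" and Y: "Y = \<Lambda> a y"
      unfolding index_set_at_def by blast
    have "\<Lambda> a y \<in> frechet_subdiff (\<phi> \<circ> \<gamma>) (\<Lambda> a (\<gamma> X))" by (rule F_sup[OF a(1) y])
    thus "Y \<in> frechet_subdiff (\<phi> \<circ> \<gamma>) X" using a(2)[symmetric] Y by simp
  next
    fix Y assume "Y \<in> limiting_subdiff (\<phi> \<circ> \<gamma>) X"
    then obtain c y where "c \<in> A" "X = \<Lambda> c (\<gamma> X)" "y \<in> limiting_subdiff \<phi> (\<gamma> X)" "Y = \<Lambda> c y"
      using L_sub[OF closed_Lambda] by blast
    thus "Y \<in> {\<Lambda> a y | a y. y \<in> limiting_subdiff \<phi> (\<gamma> X) \<and> a \<in> index_set_at A \<Lambda> \<gamma> X}"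
      unfolding index_set_at_def by blast
  next
    fix Y assume "Y \<in> {\<Lambda> a y | a y. y \<in> limiting_subdiff \<phi> (\<gamma> X) \<and> a \<in> index_set_at A \<Lambda> \<gamma> X}"
    then obtain a y where a: "a \<in> A" "X = \<Lambda> a (\<gamma> X)" and y: "y \<in> limiting_subdiff \<phi> (\<gamma> X)" and Y: "Y = \<Lambda> a y"
      unfolding index_set_at_def by blast
    show "Y \<in> limiting_subdiff (\<phi> \<circ> \<gamma>) X" using L_sup[OF a y] Y by simp
  qed
qed


end
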